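(* Let $\beta=(\beta_n)_{n\ge0}$ be a sequence of positive numbers with $\liminf_n\beta_n^{1/n}\ge1$. If every symbol $\phi$ with $\phi(0)=0$ induces a bounded composition operator $C_\phi$ on $H^2(\beta)$, then $\beta$ is bounded above.
   Context: $H^2(\beta)$ is the Hilbert space of analytic functions $f(z)=\sum_{n\ge0}a_nz^n$ on the unit disk $\mathbb D$ with $\|f\|^2=\sum_{n\ge0}|a_n|^2\beta_n<\infty$. A symbol is a non-constant analytic map $\phi:\mathbb D\to\mathbb D$ and $C_\phi f=f\circ\phi$; "bounded on $H^2(\beta)$" means $C_\phi$ maps $H^2(\beta)$ boundedly into itself. *)

theory Defs
  imports "HOL-Complex_Analysis.Complex_Analysis"
begin

definition taylor_coeff :: "(complex \<Rightarrow> complex) \<Rightarrow> nat \<Rightarrow> complex" where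
  "taylor_coeff f n = (deriv ^^ n) f 0 / of_nat (fact n)"

definition in_H2 :: "(nat \<Rightarrow> real) \<Rightarrow> (complex \<Rightarrow> complex) \<Rightarrow> bool" where
  "in_H2 \<beta> f \<longleftrightarrow> f holomorphic_on ball 0 1 \<and>
     summable (\<lambda>n. (cmod (taylor_coeff f n))^2 * \<beta> n)"

definition H2_norm :: "(nat \<Rightarrow> real) \<Rightarrow> (complex \<Rightarrow> complex) \<Rightarrow> real" where
  "H2_norm \<beta> f = sqrt (\<Sum>n. (cmod (taylor_coeff f n))^2 * \<beta> n)"

definition is_symbol :: "(complex \<Rightarrow> complex) \<Rightarrow> bool" where
  "is_symbol \<phi> \<longleftrightarrow> \<phi> holomorphic_on ball 0 1 \<and> \<phi> ` ball 0 1 \<subseteq> ball 0 1 \<and>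
     \<not> (\<exists>c. \<forall>z\<in>ball 0 1. \<phi> z = c)"

definition comp_bounded :: "(nat \<Rightarrow> real) \<Rightarrow> (complex \<Rightarrow> complex) \<Rightarrow> bool" where
  "comp_bounded \<beta> \<phi> \<longleftrightarrow> (\<exists>C. \<forall>f. in_H2 \<beta> f \<longrightarrow>
     in_H2 \<beta> (f \<circ> \<phi>) \<and> H2_norm \<beta> (f \<circ> \<phi>) \<le> C * H2_norm \<beta> f)"

end

theory Submission
  imports Defs
begin

lemma taylor_coeff_fps:
  "fps_conv_radius F > 0 \<Longrightarrow> taylor_coeff (eval_fps F) n = fps_nth F n"
  by (simp add: taylor_coeff_def fps_nth_conv_deriv)

lemma higher_deriv_zero: "(deriv ^^ k) (\<lambda>_::complex. 0::complex) = (\<lambda>_. 0)"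
  by (induction k) auto

lemma higher_deriv_const_Suc: "(deriv ^^ Suc k) (\<lambda>_::complex. c::complex) = (\<lambda>_. 0)"
  by (simp only: funpow_Suc_right o_def deriv_const higher_deriv_zero)

theorem mainTheorem4:
  fixes \<beta> :: "nat \<Rightarrow> real"
  assumes pos: "\<And>n. \<beta> n > 0"
    and liminf: "liminf (\<lambda>n. ereal (\<beta> n powr (1 / real n))) \<ge> 1"
    and bdd: "\<And>\<phi>. is_symbol \<phi> \<Longrightarrow> \<phi> 0 = 0 \<Longrightarrow> comp_bounded \<beta> \<phi>"
  shows "bdd_above (range \<beta>)"
proof (rule ccontr)
  assume nb: "\<not> bdd_above (range \<beta>)"
  have ex: "\<exists>m>N. \<beta> m \<ge> M" for N M
  proof (rule ccontr)
    assume "\<not> ?thesis"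
    then have h: "\<forall>m>N. \<beta> m < M" by auto
    have "\<beta> m \<le> max M (Max (\<beta> ` {..N}))" for m
    proof (cases "m \<le> N")
      case True
      then have "\<beta> m \<le> Max (\<beta> ` {..N})" by (intro Max_ge) auto
      then show ?thesis by linarith
    next
      case False
      then show ?thesis using h by (meson leI less_imp_le max.coboundedI1)
    qed
    then have "bdd_above (range \<beta>)" by (intro bdd_aboveI) auto
    with nb show False by simp
  qed
  have "\<exists>f. \<forall>k. (f k > 0 \<and> \<beta> (f k) \<ge> 4^(k+2)) \<and> f k < f (Suc k)"
  proof (rule dependent_nat_choice)
    show "\<exists>x. x > 0 \<and> \<beta> x \<ge> 4^(0+2)" using ex[of 0] by auto
  next
    fix x k assume "x > 0 \<and> \<beta> x \<ge> 4^(k+2)"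
    then show "\<exists>y. (y > 0 \<and> \<beta> y \<ge> 4^(Suc k+2)) \<and> x < y"
      using ex[of x "4^(Suc k+2)"] by (auto intro: less_trans)
  qed
  then obtain n where n: "\<And>k. n k > 0" "\<And>k. \<beta> (n k) \<ge> 4^(k+2)" "\<And>k. n k < n (Suc k)"
    by blast
  have sm: "strict_mono n" using n(3) by (simp add: strict_mono_Suc_iff)
  have injn: "inj n" using sm strict_mono_imp_inj_on by blast
  define a :: "nat \<Rightarrow> complex" where
    "a m = (if m \<in> range n then of_real ((1/2)^(inv n m + 2)) else 0)" for m
  have an: "a (n k) = of_real ((1/2)^(k+2))" for k
    using injn by (simp add: a_def)
  have a0: "m \<notin> range n \<Longrightarrow> a m = 0" for m by (simp add: a_def)
  have s1: "(\<lambda>k. (1/4) * (1/2::real)^k) sums ((1/4) * 2)"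
    by (intro sums_mult) (use geometric_sums[of "1/2::real"] in simp)
  have nak: "norm (a (n k)) = (1/4) * (1/2::real)^k" for k
    by (simp only: an norm_of_real) (simp add: power_add)
  have eq: "(\<lambda>k. norm (a (n k))) = (\<lambda>k. (1/4) * (1/2::real)^k)"
    by (rule ext) (rule nak)
  have "(\<lambda>k. norm (a (n k))) sums (1/2)"
    unfolding eq using s1 by simp
  then have nsum: "(\<lambda>m. norm (a m)) sums (1/2)"
    using sums_mono_reindex[OF sm, of "\<lambda>m. norm (a m)"] a0 by auto
  then have nsummable: "summable (\<lambda>m. norm (a m))" by (rule sums_summable)
  have nsuminf: "(\<Sum>m. norm (a m)) = 1/2" using nsum by (rule sums_unique[symmetric])
  have bnd: "summable (\<lambda>m. norm (a m * z ^ m))" if "norm z \<le> 1" for z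
  proof (rule summable_comparison_test'[OF nsummable])
    fix m :: nat
    have "norm (z ^ m) \<le> 1" using that by (simp add: norm_power power_le_one)
    then show "norm (norm (a m * z ^ m)) \<le> norm (a m)"
      by (simp add: norm_mult mult_left_le)
  qed
  define F where "F = Abs_fps a"
  have rad: "fps_conv_radius F \<ge> 1"
    unfolding fps_conv_radius_def F_def
  proof (rule conv_radius_geI_ex')
    fix r :: real assume "0 < r" "ereal r < 1"
    then have "norm (of_real r :: complex) \<le> 1" by auto
    from summable_norm_cancel[OF bnd[OF this]]
    show "summable (\<lambda>m. fps_nth (Abs_fps a) m * of_real r ^ m)" by simp
  qed
  have radpos: "fps_conv_radius F > 0"
    by (rule less_le_trans[OF _ rad]) simp
  define g where "g = eval_fps F"
  have tc: "taylor_coeff g m = a m" for m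
    using taylor_coeff_fps[OF radpos] by (simp add: g_def F_def)
  have hol: "g holomorphic_on ball 0 1"
    unfolding g_def by (intro holomorphic_on_eval_fps ball_eball_mono) (use rad in \<open>simp add: one_ereal_def\<close>)
  have gb: "norm (g z) \<le> 1/2" if "norm z \<le> 1" for z
  proof -
    have "norm (g z) = norm (\<Sum>m. a m * z ^ m)" by (simp add: g_def eval_fps_def F_def)
    also have "\<dots> \<le> (\<Sum>m. norm (a m * z ^ m))" by (rule summable_norm[OF bnd[OF that]])
    also have "\<dots> \<le> (\<Sum>m. norm (a m))"
    proof (rule suminf_le[OF _ bnd[OF that] nsummable])
      fix m :: nat
      have "norm (z ^ m) \<le> 1" using that by (simp add: norm_power power_le_one)
      then show "norm (a m * z ^ m) \<le> norm (a m)"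
        by (simp add: norm_mult mult_left_le)
    qed
    finally show ?thesis using nsuminf by simp
  qed
  have 0: "0 \<notin> range n" using n(1) by (metis imageE less_numeral_extra(3))
  have g0: "g 0 = 0" by (simp add: g_def eval_fps_at_0 F_def a0[OF 0])
  have sym: "is_symbol g"
    unfolding is_symbol_def
  proof (intro conjI hol)
    show "g ` ball 0 1 \<subseteq> ball 0 1"
    proof
      fix w assume "w \<in> g ` ball 0 1"
      then obtain z where z: "z \<in> ball 0 1" "w = g z" by auto
      then have "norm z \<le> 1" by simp
      then show "w \<in> ball 0 1" using gb[of z] z by simp
    qed
    show "\<not> (\<exists>c. \<forall>z\<in>ball 0 1. g z = c)"
    proof
      assume "\<exists>c. \<forall>z\<in>ball 0 1. g z = c"
      then obtain c where c: "\<forall>z\<in>ball 0 1. g z = c" by blast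
      have ev: "eventually (\<lambda>z. g z = c) (nhds 0)"
        using c eventually_nhds_in_open[of "ball (0::complex) 1" 0]
        by (auto elim!: eventually_mono)
      obtain k where k: "n 0 = Suc k" using n(1)[of 0] gr0_implies_Suc by blast
      have "(deriv ^^ n 0) g 0 = (deriv ^^ n 0) (\<lambda>_. c) 0"
        by (rule higher_deriv_cong_ev[OF ev refl])
      also have "\<dots> = 0" by (simp only: k higher_deriv_const_Suc)
      finally have "taylor_coeff g (n 0) = 0" by (simp add: taylor_coeff_def)
      then show False using tc[of "n 0"] an[of 0] by simp
    qed
  qed
  obtain C where C: "\<And>f. in_H2 \<beta> f \<Longrightarrow> in_H2 \<beta> (f \<circ> g)"
    using bdd[OF sym g0] unfolding comp_bounded_def by blast
  have idF: "eval_fps (fps_X :: complex fps) = (\<lambda>z. z)" by (rule ext) simp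
  have tcid: "taylor_coeff (\<lambda>z. z) m = (if m = 1 then 1 else 0)" for m
    using taylor_coeff_fps[of "fps_X :: complex fps" m] by (simp add: idF fps_X_nth)
  have "in_H2 \<beta> (\<lambda>z. z)"
    unfolding in_H2_def
  proof
    show "(\<lambda>z. z) holomorphic_on ball 0 1" by (rule holomorphic_intros)
    have "(\<lambda>m. (cmod (taylor_coeff (\<lambda>z. z) m))^2 * \<beta> m) = (\<lambda>m. if m = 1 then \<beta> m else 0)"
      by (rule ext) (simp add: tcid)
    then show "summable (\<lambda>m. (cmod (taylor_coeff (\<lambda>z. z) m))^2 * \<beta> m)" by simp
  qed
  from C[OF this] have "in_H2 \<beta> g" by (simp add: o_def)
  then have su: "summable (\<lambda>m. (cmod (a m))^2 * \<beta> m)" by (simp add: in_H2_def tc)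
  then have "(\<lambda>m. (cmod (a m))^2 * \<beta> m) sums (\<Sum>m. (cmod (a m))^2 * \<beta> m)"
    by (rule summable_sums)
  then have "(\<lambda>k. (cmod (a (n k)))^2 * \<beta> (n k)) sums (\<Sum>m. (cmod (a m))^2 * \<beta> m)"
    using sums_mono_reindex[OF sm, of "\<lambda>m. (cmod (a m))^2 * \<beta> m"] a0 by auto
  then have "(\<lambda>k. (cmod (a (n k)))^2 * \<beta> (n k)) \<longlonglongrightarrow> 0"
    by (intro summable_LIMSEQ_zero sums_summable)
  then have "eventually (\<lambda>k. (cmod (a (n k)))^2 * \<beta> (n k) < 1) sequentially"
    by (rule order_tendstoD(2)) simp
  then obtain k where k: "(cmod (a (n k)))^2 * \<beta> (n k) < 1"
    by (auto simp: eventually_sequentially)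
  have sq1: "((1/4) * (1/2::real)^k)^2 * 4^(k+2) = 1"
  proof -
    have h: "(1/2::real)^k * 2^k = 1" by (simp flip: power_mult_distrib)
    have h4: "(4::real)^(k+2) = 16 * (2^k * 2^k)" by (simp add: power_add flip: power_mult_distrib)
    have "((1/4) * (1/2::real)^k)^2 * 4^(k+2) = ((1/2)^k * 2^k)^2"
      unfolding h4 by (simp add: power2_eq_square)
    also have "... = 1" using h by simp
    finally show ?thesis .
  qed
  have "(cmod (a (n k)))^2 * \<beta> (n k) \<ge> (cmod (a (n k)))^2 * 4^(k+2)"
    by (intro mult_left_mono n(2)) simp
  then have "(cmod (a (n k)))^2 * \<beta> (n k) \<ge> 1" using sq1 by (simp only: nak)
  with k show False by simp
qed

end
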